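(* Consider the planar system $$\frac{dC}{dt} = 1 + m_1\frac{CL}{1+L} - m_2\frac{CL}{1+m_3C} - m_4C,\qquad \frac{dL}{dt} = L - m_5 CL,$$ with positive parameters $m_1,\dots,m_5$, and its equilibrium $E_3=(1/m_5,L_3)$, where $L_3=\frac{-b+\sqrt{\Delta}}{2a}$ with $a=-\frac{m_2}{1+m_3/m_5}$, $b=m_1+m_5-m_4-\frac{m_2}{1+m_3/m_5}$, $c=m_5-m_4$, $\Delta=b^2-4ac$. A Hopf bifurcation occurs at $E_3$ when $$m_2=\frac{(m_3+m_5)^2\,(m_1m_3-m_4m_3-m_5^2)}{m_3\,(m_3m_4+m_5^2)},$$ under the conditions $$m_1>\frac{(m_3m_4+m_5^2)^2}{m_3^2(m_4-m_5)}\quad\text{and}\quad m_4>m_5.$$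
   Context: Nondimensional model of CAR-T cells $C$ and lymphoma cells $L$; $E_3$ is one of the two coexistence equilibria with $C=1/m_5$, its $L$-coordinate being a root of $aL^2+bL+c=0$. *)

theory Defs
  imports "HOL-Analysis.Analysis"
begin

definition cart_field :: "real \<Rightarrow> real \<Rightarrow> real \<Rightarrow> real \<Rightarrow> real \<Rightarrow> real \<times> real \<Rightarrow> real \<times> real" where
  "cart_field m1 m2 m3 m4 m5 x =
     (let C = fst x; L = snd x in
       (1 + m1 * C * L / (1 + L) - m2 * C * L / (1 + m3 * C) - m4 * C,
        L - m5 * C * L))"

definition L3 :: "real \<Rightarrow> real \<Rightarrow> real \<Rightarrow> real \<Rightarrow> real \<Rightarrow> real" where
  "L3 m1 m2 m3 m4 m5 =
     (let a = - m2 / (1 + m3 / m5);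
          b = m1 + m5 - m4 - m2 / (1 + m3 / m5);
          c = m5 - m4;
          \<Delta> = b\<^sup>2 - 4 * a * c
      in (- b + sqrt \<Delta>) / (2 * a))"

definition E3 :: "real \<Rightarrow> real \<Rightarrow> real \<Rightarrow> real \<Rightarrow> real \<Rightarrow> real \<times> real" where
  "E3 m1 m2 m3 m4 m5 = (1 / m5, L3 m1 m2 m3 m4 m5)"

definition tr2 :: "(real \<times> real \<Rightarrow> real \<times> real) \<Rightarrow> real" where
  "tr2 J = fst (J (1, 0)) + snd (J (0, 1))"

definition det2 :: "(real \<times> real \<Rightarrow> real \<times> real) \<Rightarrow> real" where
  "det2 J = fst (J (1, 0)) * snd (J (0, 1)) - fst (J (0, 1)) * snd (J (1, 0))"

definition eigenvalues2 :: "(real \<times> real \<Rightarrow> real \<times> real) \<Rightarrow> complex set" where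
  "eigenvalues2 J = {z. z\<^sup>2 - complex_of_real (tr2 J) * z + complex_of_real (det2 J) = 0}"

text \<open>Hopf bifurcation (standard hypotheses of the planar Hopf theorem) for the family
  F \<mu> with a branch of equilibria xe \<mu> at \<mu> = \<mu>0: on a neighbourhood of \<mu>0, xe \<mu> is an
  equilibrium at which F \<mu> is differentiable with Jacobian J \<mu>; the Jacobian at \<mu>0 has
  exactly the eigenvalues +/-i\<omega> with \<omega> > 0; and a continuation ev(\<mu>) of the eigenvalue i\<omega>
  crosses the imaginary axis with nonzero speed.\<close>
definition hopf_bifurcation_at ::
  "(real \<Rightarrow> real \<times> real \<Rightarrow> real \<times> real) \<Rightarrow> (real \<Rightarrow> real \<times> real) \<Rightarrow> real \<Rightarrow> bool" where
  "hopf_bifurcation_at F xe \<mu>0 \<longleftrightarrow>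
     (\<exists>\<delta>>0. \<exists>J. \<exists>ev::real \<Rightarrow> complex. \<exists>\<omega>>0. \<exists>d.
        (\<forall>\<mu>. \<bar>\<mu> - \<mu>0\<bar> < \<delta> \<longrightarrow>
              F \<mu> (xe \<mu>) = 0 \<and> (F \<mu> has_derivative J \<mu>) (at (xe \<mu>)) \<and>
              ev \<mu> \<in> eigenvalues2 (J \<mu>)) \<and>
        eigenvalues2 (J \<mu>0) = {\<i> * complex_of_real \<omega>, - \<i> * complex_of_real \<omega>} \<and>
        ev \<mu>0 = \<i> * complex_of_real \<omega> \<and>
        ((\<lambda>\<mu>. Re (ev \<mu>)) has_real_derivative d) (at \<mu>0) \<and> d \<noteq> 0)"

end

theory Submission
  imports Defs
begin

lemma cart_aux:
  fixes u v L C m1 m2 m3 m4 x y :: real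
  assumes hu: "u * (1 + L) = 1" and hv: "v * (1 + m3 * C) = 1"
  shows "(m1 * C * y + m1 * x * L) * u -
         m1 * C * L * (u * y * u) -
         ((m2 * C * y + m2 * x * L) * v -
          m2 * C * L * (v * (m3 * x) * v)) -
         m4 * x =
         (m1 * L * u - m2 * L * (v * v) - m4) * x +
         (m1 * C * (u * u) - m2 * C * v) * y"
proof -
  have a: "u - L * u * u - u * u = u * (1 - u * (1 + L))" by (simp add: algebra_simps)
  have b: "v - m3 * C * v * v - v * v = v * (1 - v * (1 + m3 * C))" by (simp add: algebra_simps)
  have "(m1 * C * y + m1 * x * L) * u -
         m1 * C * L * (u * y * u) -
         ((m2 * C * y + m2 * x * L) * v -
          m2 * C * L * (v * (m3 * x) * v)) -
         m4 * x - ((m1 * L * u - m2 * L * (v * v) - m4) * x +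
         (m1 * C * (u * u) - m2 * C * v) * y)
       = m1*C*y*(u - L * u * u - u * u) - m2*L*x*(v - m3 * C * v * v - v * v)"
    by (simp add: algebra_simps)
  also have "\<dots> = 0" unfolding a b hu hv by simp
  finally show ?thesis by simp
qed

lemma cart_deriv:
  fixes C L :: real
  assumes "1 + L \<noteq> 0" "1 + m3 * C \<noteq> 0"
  shows "(cart_field m1 m2 m3 m4 m5 has_derivative
     (\<lambda>h. ((m1 * L / (1 + L) - m2 * L / (1 + m3 * C)^2 - m4) * fst h
             + (m1 * C / (1 + L)^2 - m2 * C / (1 + m3 * C)) * snd h,
           (- m5 * L) * fst h + (1 - m5 * C) * snd h))) (at (C, L))"
proof -
  have e: "cart_field m1 m2 m3 m4 m5 = (\<lambda>x. (1 + m1 * fst x * snd x / (1 + snd x) - m2 * fst x * snd x / (1 + m3 * fst x) - m4 * fst x,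
        snd x - m5 * fst x * snd x))"
    by (auto simp: cart_field_def Let_def fun_eq_iff)
  show ?thesis unfolding e
    apply (rule has_derivative_Pair)
    subgoal
      apply (rule has_derivative_eq_rhs)
       apply (rule derivative_eq_intros refl | simp add: assms)+
      apply (rule ext)
      apply (simp only: divide_inverse power2_eq_square inverse_mult_distrib)
      apply (rule cart_aux)
      using assms by auto
    subgoal
      apply (rule has_derivative_eq_rhs)
       apply (rule derivative_eq_intros refl | simp add: assms)+
      apply (simp add: fun_eq_iff algebra_simps)
      done
    done
qed

lemma quad_small_root:
  fixes a b c L1 L2 :: real
  assumes "a < 0" "L1 < L2" "b = - a * (L1 + L2)" "c = a * L1 * L2"
  shows "b\<^sup>2 - 4 * a * c = (a * (L2 - L1))\<^sup>2" "(- b + sqrt (b\<^sup>2 - 4 * a * c)) / (2 * a) = L1"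
proof -
  show 1: "b\<^sup>2 - 4 * a * c = (a * (L2 - L1))\<^sup>2" unfolding assms(3,4) by (simp add: power2_eq_square algebra_simps)
  have "sqrt (b\<^sup>2 - 4 * a * c) = - a * (L2 - L1)" unfolding 1 using assms(1,2)
    by (simp add: real_sqrt_abs abs_mult)
  then show "(- b + sqrt (b\<^sup>2 - 4 * a * c)) / (2 * a) = L1" using assms(1)
    unfolding assms(3) by (simp add: field_simps)
qed

lemma quad_root:
  fixes a b c :: real
  assumes "a \<noteq> 0" "b\<^sup>2 - 4 * a * c \<ge> 0" "L = (- b + sqrt (b\<^sup>2 - 4 * a * c)) / (2 * a)"
  shows "a * L\<^sup>2 + b * L + c = 0" "2 * a * L + b = sqrt (b\<^sup>2 - 4 * a * c)"
proof -
  define s where "s = sqrt (b\<^sup>2 - 4 * a * c)"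
  have s2: "s\<^sup>2 = b\<^sup>2 - 4 * a * c" using assms(2) by (simp add: s_def)
  have L: "2 * a * L = - b + s" using assms(1,3) by (simp add: s_def field_simps)
  show "2 * a * L + b = sqrt (b\<^sup>2 - 4 * a * c)" using L by (simp add: s_def)
  have "4 * a * (a * L\<^sup>2 + b * L + c) = (2*a*L)\<^sup>2 + 2 * b * (2*a*L) + 4*a*c"
    by (simp add: power2_eq_square algebra_simps)
  also have "\<dots> = 0" unfolding L using s2 by (simp add: power2_eq_square algebra_simps)
  finally show "a * L\<^sup>2 + b * L + c = 0" using assms(1) by simp
qed

lemma alg0:
  fixes m1 m3 m4 m5 :: real
  assumes "m1 > 0" "m3 > 0" "m4 > 0" "m5 > 0"
    and "m4 > m5"
    and "m1 > (m3 * m4 + m5\<^sup>2)\<^sup>2 / (m3\<^sup>2 * (m4 - m5))"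
  defines "m2c \<equiv> (m3 + m5)\<^sup>2 * (m1 * m3 - m4 * m3 - m5\<^sup>2) / (m3 * (m3 * m4 + m5\<^sup>2))"
  shows "m2c > 0 \<and> L3 m1 m2c m3 m4 m5 > 0
     \<and> (m1 + m5 - m4 - m2c / (1 + m3 / m5))\<^sup>2 - 4 * (- m2c / (1 + m3 / m5)) * (m5 - m4) > 0
     \<and> m2c * m3 * m5 * L3 m1 m2c m3 m4 m5 / (m3 + m5)\<^sup>2 - m5 = 0
     \<and> L3 m1 m2c m3 m4 m5 * (m1 / (1 + L3 m1 m2c m3 m4 m5)\<^sup>2 - m2c / (1 + m3 / m5)) > 0"
proof -
  define D where "D = m1*m3 - m4*m3 - m5\<^sup>2"
  define P where "P = m3*m4 + m5\<^sup>2"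
  have m35: "m3 + m5 > 0" using assms by simp
  have P0: "P > 0" using assms(2,3,4) unfolding P_def by (intro add_pos_nonneg) auto
  have pos1: "m3\<^sup>2 * (m4 - m5) > 0" using assms by simp
  have key: "m1 * (m3\<^sup>2 * (m4 - m5)) > P\<^sup>2"
    using assms(6) pos1 unfolding P_def by (simp add: pos_divide_less_eq)
  have "P * (m3*(m4-m5)) \<le> P*P"
    using P0 assms by (intro mult_left_mono) (auto simp: P_def algebra_simps)
  then have "(m3*(m4-m5)) * (m1*m3 - P) > 0"
    using key by (simp add: power2_eq_square algebra_simps)
  moreover have "m3*(m4-m5) > 0" using assms by simp
  ultimately have "m1*m3 - P > 0" by (metis zero_less_mult_pos)
  then have D0: "D > 0" by (simp add: D_def P_def algebra_simps)
  have m2c: "m2c = (m3+m5)\<^sup>2 * D / (m3 * P)" by (simp add: m2c_def D_def P_def)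
  have m2c0: "m2c > 0" unfolding m2c using D0 P0 assms by simp
  define S where "S = m3 + m5"
  have S0: "S > 0" using m35 by (simp add: S_def)
  define k0 where "k0 = S*m5*D/(m3*P)"
  define Ls where "Ls = P / D"
  define Lo where "Lo = (m4-m5)*m3/(S*m5)"
  have K: "1 + m3/m5 = (m3+m5)/m5" using assms(4) by (simp add: field_simps)
  have "m2c = k0 * ((m3+m5)/m5)"
    unfolding m2c k0_def S_def using assms(2,4) P0 by (simp add: field_simps power2_eq_square)
  then have k0: "m2c / (1 + m3/m5) = k0"
    unfolding K using assms(4) m35 by (simp add: nonzero_divide_eq_eq)
  have k00: "k0 > 0" unfolding k0_def using assms(2,4) S0 D0 P0 by simp
  have num: "m3*(m4-m5)*D - P*(m5*S) = m1 * (m3\<^sup>2 * (m4 - m5)) - P\<^sup>2"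
    by (simp add: S_def D_def P_def power2_eq_square algebra_simps)
  have LsLo: "Ls < Lo"
    unfolding Ls_def Lo_def using num key D0 P0 assms(2,4,5) S0
    by (simp add: field_simps)
  have hb: "m1 + m5 - m4 - k0 = - (-k0) * (Ls + Lo)"
    unfolding k0_def Ls_def Lo_def using D0 P0 assms(2,4,5) S0
    apply (simp add: field_simps)
    apply (simp add: S_def D_def P_def power2_eq_square algebra_simps)
    done
  have hc: "m5 - m4 = (-k0) * Ls * Lo"
    unfolding k0_def Ls_def Lo_def using D0 P0 assms(2,4,5) S0
    by (simp add: field_simps)
  have nk0: "-k0 < 0" using k00 by simp
  note q1 = quad_small_root[of "-k0" Ls Lo, OF nk0 LsLo hb hc]
  have "L3 m1 m2c m3 m4 m5 = (- (m1 + m5 - m4 - k0) + sqrt ((m1 + m5 - m4 - k0)\<^sup>2 - 4 * (-k0) * (m5-m4)))/(2*(-k0))"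
    by (simp add: L3_def Let_def k0[symmetric])
  also have "\<dots> = Ls" by (rule q1(2))
  finally have L3eq: "L3 m1 m2c m3 m4 m5 = Ls" .
  have Ls0: "Ls > 0" unfolding Ls_def using P0 D0 by simp
  have Delta: "(m1 + m5 - m4 - m2c / (1 + m3 / m5))\<^sup>2 - 4 * (- m2c / (1 + m3 / m5)) * (m5 - m4) > 0"
  proof -
    have "(m1 + m5 - m4 - m2c / (1 + m3 / m5))\<^sup>2 - 4 * (- m2c / (1 + m3 / m5)) * (m5 - m4)
      = (m1 + m5 - m4 - k0)\<^sup>2 - 4 * (-k0) * (m5-m4)" by (simp add: k0[symmetric])
    also have "\<dots> = (- k0 * (Lo - Ls))\<^sup>2" by (rule q1(1))
    also have "\<dots> > 0" using k00 LsLo by simp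
    finally show ?thesis .
  qed
  have T0: "m2c * m3 * m5 * Ls / (m3 + m5)\<^sup>2 - m5 = 0"
    unfolding m2c Ls_def S_def[symmetric] using S0 P0 D0 assms(2,4)
    by (simp add: field_simps power2_eq_square)
  have DP: "D + P = m1 * m3" by (simp add: D_def P_def)
  have L1: "1 + Ls = m1*m3/D" unfolding Ls_def using D0 DP by (simp add: field_simps)
  have num2: "D*P - m1*m3*m5*S = m1 * (m3\<^sup>2 * (m4 - m5)) - P\<^sup>2"
    by (simp add: D_def S_def P_def power2_eq_square algebra_simps)
  have "m1 / (1 + Ls)\<^sup>2 - k0 = (D*P - m1*m3*m5*S) * D / (m1*m3\<^sup>2*P)"
    unfolding L1 k0_def using D0 P0 assms(1,2) by (simp add: field_simps power2_eq_square)
  also have "\<dots> > 0" using num2 key D0 P0 assms(1,2) by simp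
  finally have Dt0: "Ls * (m1 / (1 + Ls)\<^sup>2 - m2c / (1 + m3 / m5)) > 0"
    using Ls0 k0 by simp
  show ?thesis using m2c0 L3eq Ls0 Delta T0 Dt0 by simp
qed

lemma equil_facts:
  fixes m1 m3 m4 m5 \<mu> L :: real
  assumes m3: "m3 > 0" and m5: "m5 > 0" and L: "L > 0"
    and q: "(-\<mu>/(1+m3/m5))*L\<^sup>2 + (m1+m5-m4-\<mu>/(1+m3/m5))*L + (m5-m4) = 0"
  shows "cart_field m1 \<mu> m3 m4 m5 (1/m5, L) = 0"
    "(m1 * L / (1 + L) - \<mu> * L / (1 + m3 * (1/m5))\<^sup>2 - m4) + (1 - m5 * (1/m5))
       = \<mu> * m3 * m5 * L / (m3 + m5)\<^sup>2 - m5"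
    "(m1 * L / (1 + L) - \<mu> * L / (1 + m3 * (1/m5))\<^sup>2 - m4) * (1 - m5 * (1/m5))
      - (m1 * (1/m5) / (1 + L)\<^sup>2 - \<mu> * (1/m5) / (1 + m3 * (1/m5))) * (- m5 * L)
      = L * (m1 / (1 + L)\<^sup>2 - \<mu> / (1 + m3 / m5))"
proof -
  define K where "K = 1 + m3/m5"
  have K0: "K > 0" using m3 m5 by (simp add: K_def add_pos_pos)
  have KK: "K = (m3 + m5)/m5" using m5 by (simp add: K_def field_simps)
  have q': "(-\<mu>/K)*L\<^sup>2 + (m1+m5-m4-\<mu>/K)*L + (m5-m4) = 0" using q by (simp add: K_def)
  have e1: "m1 * L / (1 + L) = m4 - m5 + \<mu> * L / K"
  proof -
    have "m1 * L = (m4 - m5 + \<mu> * L / K) * (1 + L)"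
      using q' by (simp add: power2_eq_square algebra_simps add_divide_distrib)
    then show ?thesis using L by (simp add: field_simps)
  qed
  have c1: "1 + m3 * (1/m5) = K" by (simp add: K_def)
  show "cart_field m1 \<mu> m3 m4 m5 (1/m5, L) = 0"
  proof -
    have r: "m1 * (1/m5) * L / (1 + L) = (m1 * L / (1 + L)) / m5" by (simp add: ac_simps)
    have "1 + m1 * (1/m5) * L / (1 + L) - \<mu> * (1/m5) * L / (1 + m3 * (1/m5)) - m4 * (1/m5)
        = (m5 + m1 * L / (1 + L) - \<mu> * L / K - m4) / m5"
      unfolding c1 r unfolding e1 using m5 K0 by (simp add: field_simps)
    also have "\<dots> = 0" unfolding e1 by simp
    finally show ?thesis using m5 by (simp add: cart_field_def zero_prod_def)
  qed
  show "(m1 * L / (1 + L) - \<mu> * L / (1 + m3 * (1/m5))\<^sup>2 - m4) + (1 - m5 * (1/m5))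
       = \<mu> * m3 * m5 * L / (m3 + m5)\<^sup>2 - m5"
  proof -
    define S where "S = m3 + m5"
    have S0: "S > 0" using m3 m5 by (simp add: S_def)
    have KS: "K = S / m5" unfolding KK S_def ..
    have m3S: "m3 = S - m5" by (simp add: S_def)
    have "(m1 * L / (1 + L) - \<mu> * L / (1 + m3 * (1/m5))\<^sup>2 - m4) + (1 - m5 * (1/m5))
        = \<mu> * L / K - \<mu> * L / K\<^sup>2 - m5" unfolding c1 e1 using m5 by simp
    also have "\<dots> = \<mu> * (S - m5) * m5 * L / S\<^sup>2 - m5" unfolding KS using m5 S0
      by (simp add: field_simps power2_eq_square)
    finally show ?thesis unfolding S_def by simp
  qed
  show "(m1 * L / (1 + L) - \<mu> * L / (1 + m3 * (1/m5))\<^sup>2 - m4) * (1 - m5 * (1/m5))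
      - (m1 * (1/m5) / (1 + L)\<^sup>2 - \<mu> * (1/m5) / (1 + m3 * (1/m5))) * (- m5 * L)
      = L * (m1 / (1 + L)\<^sup>2 - \<mu> / (1 + m3 / m5))"
    using m5 by (simp add: field_simps)
qed

lemma eig_in:
  fixes t d :: real
  assumes "t\<^sup>2/4 \<le> d"
  shows "(Complex (t/2) (sqrt (d - t\<^sup>2/4)))\<^sup>2 - complex_of_real t * Complex (t/2) (sqrt (d - t\<^sup>2/4)) + complex_of_real d = 0"
proof -
  have s: "sqrt (d - t\<^sup>2/4) * sqrt (d - t\<^sup>2/4) = d - t\<^sup>2/4" using assms by simp
  show ?thesis using s by (simp add: complex_eq_iff power2_eq_square algebra_simps)
qed

lemma eig_set:
  fixes \<omega> :: real
  shows "{z. z\<^sup>2 - complex_of_real 0 * z + complex_of_real (\<omega>\<^sup>2) = 0} = {\<i> * complex_of_real \<omega>, - \<i> * complex_of_real \<omega>}"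
proof -
  have "z\<^sup>2 + complex_of_real (\<omega>\<^sup>2) = (z - \<i> * complex_of_real \<omega>) * (z + \<i> * complex_of_real \<omega>)" for z
    by (simp add: power2_eq_square algebra_simps)
  then show ?thesis by (auto simp: eq_neg_iff_add_eq_0)
qed

theorem theorem8:
  fixes m1 m3 m4 m5 :: real
  assumes "m1 > 0" "m3 > 0" "m4 > 0" "m5 > 0"
    and "m4 > m5"
    and "m1 > (m3 * m4 + m5\<^sup>2)\<^sup>2 / (m3\<^sup>2 * (m4 - m5))"
  defines "m2c \<equiv> (m3 + m5)\<^sup>2 * (m1 * m3 - m4 * m3 - m5\<^sup>2) / (m3 * (m3 * m4 + m5\<^sup>2))"
  shows "m2c > 0 \<and>
    hopf_bifurcation_at (\<lambda>m2. cart_field m1 m2 m3 m4 m5) (\<lambda>m2. E3 m1 m2 m3 m4 m5) m2c"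
proof -
  note A = alg0[OF assms(1-6), folded m2c_def]
  have m2c0: "m2c > 0" using A by simp
  define K where "K = 1 + m3 / m5"
  have K0: "K > 0" using assms(2,4) by (simp add: K_def add_pos_pos)
  define af where "af = (\<lambda>\<mu>::real. - \<mu> / K)"
  define bf where "bf = (\<lambda>\<mu>::real. m1 + m5 - m4 - \<mu> / K)"
  define Df where "Df = (\<lambda>\<mu>. (bf \<mu>)\<^sup>2 - 4 * af \<mu> * (m5 - m4))"
  define Lf where "Lf = (\<lambda>\<mu>. L3 m1 \<mu> m3 m4 m5)"
  have Lf_eq: "Lf \<mu> = (- bf \<mu> + sqrt (Df \<mu>)) / (2 * af \<mu>)" for \<mu>
    by (simp add: Lf_def L3_def Let_def af_def bf_def Df_def K_def)
  define T where "T = (\<lambda>\<mu>. \<mu> * m3 * m5 * Lf \<mu> / (m3 + m5)\<^sup>2 - m5)"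
  define Dt where "Dt = (\<lambda>\<mu>. Lf \<mu> * (m1 / (1 + Lf \<mu>)\<^sup>2 - \<mu> / (1 + m3 / m5)))"
  have Df0: "Df m2c > 0" using A by (simp add: Df_def af_def bf_def K_def)
  have Lf0: "Lf m2c > 0" using A by (simp add: Lf_def)
  have T0: "T m2c = 0" using A by (simp add: T_def Lf_def)
  have Dt0: "Dt m2c > 0" using A by (simp add: Dt_def Lf_def)
  have af0: "af m2c \<noteq> 0" using m2c0 K0 by (simp add: af_def)
  have cLf: "isCont Lf m2c"
    unfolding Lf_eq[abs_def] using af0 K0
    by (intro continuous_intros) (auto simp: af_def bf_def Df_def)
  have cDf: "isCont Df m2c" unfolding Df_def af_def bf_def using K0 by (intro continuous_intros) auto
  have cT: "isCont T m2c" unfolding T_def using cLf assms(2,4) by (intro continuous_intros) auto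
  have cDt: "isCont Dt m2c" unfolding Dt_def using cLf Lf0 assms(2,4) K0[unfolded K_def] by (intro continuous_intros) auto
  have cG: "isCont (\<lambda>\<mu>. Dt \<mu> - (T \<mu>)\<^sup>2 / 4) m2c" using cT cDt by (intro continuous_intros) auto
  have ev1: "eventually (\<lambda>\<mu>. Df \<mu> > 0) (nhds m2c)"
    using cDf Df0 by (auto simp: isCont_def tendsto_at_iff_tendsto_nhds dest: order_tendstoD)
  have ev2: "eventually (\<lambda>\<mu>. Lf \<mu> > 0) (nhds m2c)"
    using cLf Lf0 by (auto simp: isCont_def tendsto_at_iff_tendsto_nhds dest: order_tendstoD)
  have ev3: "eventually (\<lambda>\<mu>. Dt \<mu> - (T \<mu>)\<^sup>2 / 4 > 0) (nhds m2c)"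
  proof -
    have "((\<lambda>\<mu>. Dt \<mu> - (T \<mu>)\<^sup>2 / 4) \<longlongrightarrow> Dt m2c - (T m2c)\<^sup>2 / 4) (nhds m2c)"
      using tendsto_at_iff_tendsto_nhds[of "(\<lambda>\<mu>. Dt \<mu> - (T \<mu>)\<^sup>2 / 4)" m2c] cG
      unfolding isCont_def by simp
    moreover have "0 < Dt m2c - (T m2c)\<^sup>2 / 4" using Dt0 T0 by simp
    ultimately show ?thesis by (rule order_tendstoD(1))
  qed
  have ev4: "eventually (\<lambda>\<mu>. \<mu> > 0) (nhds m2c)"
    using m2c0 by (intro order_tendstoD(1)[OF filterlim_ident]) auto
  have "eventually (\<lambda>\<mu>. Df \<mu> > 0 \<and> Lf \<mu> > 0 \<and> Dt \<mu> - (T \<mu>)\<^sup>2 / 4 > 0 \<and> \<mu> > 0) (nhds m2c)"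
    using ev1 ev2 ev3 ev4 by eventually_elim auto
  then obtain \<delta> where \<delta>: "\<delta> > 0" and Q: "\<And>\<mu>. dist \<mu> m2c < \<delta> \<Longrightarrow>
      Df \<mu> > 0 \<and> Lf \<mu> > 0 \<and> Dt \<mu> - (T \<mu>)\<^sup>2 / 4 > 0 \<and> \<mu> > 0"
    unfolding eventually_nhds_metric by blast
  have quad: "af \<mu> * (Lf \<mu>)\<^sup>2 + bf \<mu> * Lf \<mu> + (m5 - m4) = 0 \<and> 2 * af \<mu> * Lf \<mu> + bf \<mu> = sqrt (Df \<mu>)"
    if "dist \<mu> m2c < \<delta>" for \<mu>
  proof -
    from Q[OF that] have "Df \<mu> > 0" "\<mu> > 0" by auto
    then have "af \<mu> \<noteq> 0" using K0 by (simp add: af_def)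
    from quad_root[OF this, of "bf \<mu>" "m5 - m4" "Lf \<mu>"] \<open>Df \<mu> > 0\<close> show ?thesis
      by (simp add: Lf_eq Df_def)
  qed
  define J where "J = (\<lambda>\<mu>. \<lambda>h. ((m1 * Lf \<mu> / (1 + Lf \<mu>) - \<mu> * Lf \<mu> / (1 + m3 * (1/m5))\<^sup>2 - m4) * fst h
             + (m1 * (1/m5) / (1 + Lf \<mu>)\<^sup>2 - \<mu> * (1/m5) / (1 + m3 * (1/m5))) * snd h,
           (- m5 * Lf \<mu>) * fst h + (1 - m5 * (1/m5)) * snd h))"
  define ev where "ev = (\<lambda>\<mu>. Complex (T \<mu> / 2) (sqrt (Dt \<mu> - (T \<mu>)\<^sup>2 / 4)))"
  define \<omega> where "\<omega> = sqrt (Dt m2c)"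
  have \<omega>0: "\<omega> > 0" using Dt0 by (simp add: \<omega>_def)
  have props: "cart_field m1 \<mu> m3 m4 m5 (E3 m1 \<mu> m3 m4 m5) = 0 \<and>
        (cart_field m1 \<mu> m3 m4 m5 has_derivative J \<mu>) (at (E3 m1 \<mu> m3 m4 m5)) \<and>
        tr2 (J \<mu>) = T \<mu> \<and> det2 (J \<mu>) = Dt \<mu>"
    if "dist \<mu> m2c < \<delta>" for \<mu>
  proof -
    from Q[OF that] have L0: "Lf \<mu> > 0" by auto
    have q: "(-\<mu>/(1+m3/m5))*(Lf \<mu>)\<^sup>2 + (m1+m5-m4-\<mu>/(1+m3/m5))*Lf \<mu> + (m5-m4) = 0"
      using quad[OF that] by (simp add: af_def bf_def K_def)
    note ef = equil_facts[OF assms(2) assms(4) L0 q]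
    have E: "E3 m1 \<mu> m3 m4 m5 = (1/m5, Lf \<mu>)" by (simp add: E3_def Lf_def)
    have d: "(cart_field m1 \<mu> m3 m4 m5 has_derivative J \<mu>) (at (1/m5, Lf \<mu>))"
    proof -
      have h1: "1 + Lf \<mu> \<noteq> 0" using L0 by simp
      have h2: "1 + m3 * (1/m5) \<noteq> 0" using K0 by (simp add: K_def)
      show ?thesis unfolding J_def by (rule cart_deriv[OF h1 h2])
    qed
    show ?thesis unfolding E using ef d
      by (simp add: tr2_def det2_def J_def T_def Dt_def)
  qed
  obtain Lp where Lp: "(Lf has_real_derivative Lp) (at m2c)"
  proof -
    define Dp where "Dp = 2*(m1+m5-m4-m2c/K)*(-1/K) + 4*(m5-m4)/K"
    have dDf: "(Df has_real_derivative Dp) (at m2c)"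
      unfolding Df_def af_def bf_def Dp_def
      using K0 by (auto intro!: derivative_eq_intros simp: field_simps eval_nat_numeral)
    have dS: "((\<lambda>\<mu>. sqrt (Df \<mu>)) has_real_derivative (inverse (sqrt (Df m2c)) / 2 * Dp)) (at m2c)"
      by (rule DERIV_chain2[OF DERIV_real_sqrt[OF Df0] dDf])
    have dnum: "((\<lambda>\<mu>. - bf \<mu> + sqrt (Df \<mu>)) has_real_derivative (1/K + inverse (sqrt (Df m2c)) / 2 * Dp)) (at m2c)"
    proof -
      have dB: "((\<lambda>\<mu>. - bf \<mu>) has_real_derivative 1/K) (at m2c)"
        unfolding bf_def using K0 by (auto intro!: derivative_eq_intros)
      show ?thesis using DERIV_add[OF dB dS] by simp
    qed
    have dden: "((\<lambda>\<mu>. 2 * af \<mu>) has_real_derivative (-2/K)) (at m2c)"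
      unfolding af_def
      using K0 by (auto intro!: derivative_eq_intros)
    have "2 * af m2c \<noteq> 0" using af0 by simp
    note DERIV_divide[OF dnum dden this]
    moreover have "(\<lambda>\<mu>. (- bf \<mu> + sqrt (Df \<mu>)) / (2 * af \<mu>)) = Lf" using Lf_eq by auto
    ultimately show ?thesis using that by auto
  qed
  have dG: "((\<lambda>\<mu>. af \<mu> * (Lf \<mu>)\<^sup>2 + bf \<mu> * Lf \<mu> + (m5 - m4)) has_real_derivative
      ((-1/K) * (Lf m2c)\<^sup>2 + af m2c * (2 * Lf m2c * Lp) + (-1/K) * Lf m2c + bf m2c * Lp)) (at m2c)"
    unfolding af_def bf_def
    using K0 by (auto intro!: derivative_eq_intros Lp simp: field_simps power2_eq_square)
  have evG: "eventually (\<lambda>\<mu>. af \<mu> * (Lf \<mu>)\<^sup>2 + bf \<mu> * Lf \<mu> + (m5 - m4) = 0) (nhds m2c)"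
    unfolding eventually_nhds_metric using \<delta> quad by blast
  have "((\<lambda>\<mu>. 0::real) has_real_derivative
      ((-1/K) * (Lf m2c)\<^sup>2 + af m2c * (2 * Lf m2c * Lp) + (-1/K) * Lf m2c + bf m2c * Lp)) (at m2c)"
    using dG by (subst (asm) DERIV_cong_ev[OF refl evG refl])
  then have G0: "(-1/K) * (Lf m2c)\<^sup>2 + af m2c * (2 * Lf m2c * Lp) + (-1/K) * Lf m2c + bf m2c * Lp = 0"
    using DERIV_const DERIV_unique by blast
  have sq: "2 * af m2c * Lf m2c + bf m2c = sqrt (Df m2c)" using quad[of m2c] \<delta> by simp
  have "sqrt (Df m2c) * Lp = (Lf m2c)\<^sup>2 / K + Lf m2c / K"
  proof -
    have "(2 * af m2c * Lf m2c + bf m2c) * Lp = (Lf m2c)\<^sup>2 / K + Lf m2c / K"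
      using G0 by (simp add: algebra_simps)
    then show ?thesis unfolding sq .
  qed
  moreover have "(Lf m2c)\<^sup>2 / K + Lf m2c / K > 0" using Lf0 K0 by (intro add_pos_pos divide_pos_pos) auto
  ultimately have "sqrt (Df m2c) * Lp > 0" by simp
  then have Lp0: "Lp > 0" using Df0 by (metis real_sqrt_gt_zero zero_less_mult_pos)
  define d where "d = m3 * m5 * (Lf m2c + m2c * Lp) / (m3 + m5)\<^sup>2 / 2"
  have d0: "d > 0" unfolding d_def using assms(2,4) Lf0 m2c0 Lp0 by (intro divide_pos_pos mult_pos_pos add_pos_pos) auto
  have Re_ev: "(\<lambda>\<mu>. Re (ev \<mu>)) = (\<lambda>\<mu>. T \<mu> / 2)" by (simp add: ev_def fun_eq_iff)
  have dRe: "((\<lambda>\<mu>. Re (ev \<mu>)) has_real_derivative d) (at m2c)"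
    unfolding Re_ev T_def d_def
    using assms(2,4) by (auto intro!: derivative_eq_intros Lp simp: field_simps)
  have P0: "\<forall>\<mu>. \<bar>\<mu> - m2c\<bar> < \<delta> \<longrightarrow>
              cart_field m1 \<mu> m3 m4 m5 (E3 m1 \<mu> m3 m4 m5) = 0 \<and>
              (cart_field m1 \<mu> m3 m4 m5 has_derivative J \<mu>) (at (E3 m1 \<mu> m3 m4 m5)) \<and>
              ev \<mu> \<in> eigenvalues2 (J \<mu>)"
  proof (intro allI impI)
    fix \<mu> assume "\<bar>\<mu> - m2c\<bar> < \<delta>"
    then have dm: "dist \<mu> m2c < \<delta>" by (simp add: dist_real_def)
    from Q[OF dm] have le: "(T \<mu>)\<^sup>2 / 4 \<le> Dt \<mu>" by simp
    show "cart_field m1 \<mu> m3 m4 m5 (E3 m1 \<mu> m3 m4 m5) = 0 \<and>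
              (cart_field m1 \<mu> m3 m4 m5 has_derivative J \<mu>) (at (E3 m1 \<mu> m3 m4 m5)) \<and>
              ev \<mu> \<in> eigenvalues2 (J \<mu>)"
      using props[OF dm] eig_in[OF le] by (simp add: eigenvalues2_def ev_def)
  qed
  have pm: "tr2 (J m2c) = T m2c" "det2 (J m2c) = Dt m2c" using props[of m2c] \<delta> by auto
  have Dtw: "Dt m2c = \<omega>\<^sup>2" using Dt0 by (simp add: \<omega>_def)
  have eigs: "eigenvalues2 (J m2c) = {\<i> * complex_of_real \<omega>, - \<i> * complex_of_real \<omega>}"
    unfolding eigenvalues2_def pm T0 Dtw by (rule eig_set)
  have ev0: "ev m2c = \<i> * complex_of_real \<omega>"
    by (simp add: ev_def T0 \<omega>_def complex_eq_iff)
  have "hopf_bifurcation_at (\<lambda>m2. cart_field m1 m2 m3 m4 m5) (\<lambda>m2. E3 m1 m2 m3 m4 m5) m2c"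
    unfolding hopf_bifurcation_at_def
    using \<delta> P0 eigs ev0 \<omega>0 dRe d0 by (intro exI[of _ \<delta>] exI[of _ J] exI[of _ ev] exI[of _ \<omega>] exI[of _ d]) auto
  then show ?thesis using m2c0 by simp
qed

end
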